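(* In the setting of the context, let $\mu_1,\mu_2$ be two nowhere-equal solutions on an open set $U$ of $$\widehat e_1\cdot\nabla\mu=-C_{31}^{2}-\mu\big(C_{31}^{3}+C_{12}^{2}\big)-\mu^{2}C_{12}^{3},$$ let $\alpha_1,\alpha_2$ be nowhere-vanishing functions on $U$, and let $J_i=\alpha_i(\widehat e_2+\mu_i\widehat e_3)$, $i=1,2$ (these are Poisson vector fields). Then $J_1$ and $J_2$ are compatible, i.e. $J_1+J_2$ is again a Poisson vector field, if and only if $$\widehat e_1\cdot\nabla\ln\left|\frac{\alpha_1}{\alpha_2}\right|=C_{12}^{3}(\mu_1-\mu_2).$$
   Context: Setting: $M$ is an oriented three-dimensional manifold with a Riemannian metric $g$; $\nabla$, $\nabla\times$ and $\times$ denote gradient, curl and cross product. A Poisson vector field is a vector field $J$ with $J\cdot(\nabla\times J)=0$; two Poisson vector fields $J_1,J_2$ are compatible if $J_1+J_2$ is also a Poisson vector field. $v$ is a nowhere vanishing vector field, $\widehat e_1=v/\Vert v\Vert$, extended to a local oriented orthonormal frame $(\widehat e_1,\widehat e_2,\widehat e_3)$ with $\widehat e_3=\widehat e_1\times\widehat e_2$, and structure functions $C_{ij}^k$ defined by $[\widehat e_i,\widehat e_j]=C_{ij}^k\widehat e_k$. *)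

theory Defs
  imports "HOL-Analysis.Analysis" "HOL-Analysis.Cross3"
begin

(* Local (chart) model of the oriented Riemannian 3-manifold:
  points are in an open set of real^3 (an oriented coordinate chart);
  the metric is given by its Gram matrix field G (symmetric positive definite);
  vector fields are maps real^3 <Rightarrow> real^3 (components in coordinate basis). *)

definition riem_metric :: "(real^3 \<Rightarrow> real^3^3) \<Rightarrow> (real^3) set \<Rightarrow> bool" where
  "riem_metric G U \<longleftrightarrow>
     (\<forall>x\<in>U. transpose (G x) = G x \<and> (\<forall>w. w \<noteq> 0 \<longrightarrow> w \<bullet> (G x *v w) > 0)) \<and>
     (\<forall>x\<in>U. G differentiable (at x))"

definition gdot :: "(real^3 \<Rightarrow> real^3^3) \<Rightarrow> real^3 \<Rightarrow> real^3 \<Rightarrow> real^3 \<Rightarrow> real" where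
  "gdot G x u w = u \<bullet> (G x *v w)"

definition gnorm :: "(real^3 \<Rightarrow> real^3^3) \<Rightarrow> real^3 \<Rightarrow> real^3 \<Rightarrow> real" where
  "gnorm G x u = sqrt (gdot G x u u)"

definition pd :: "(real^3 \<Rightarrow> 'b::real_normed_vector) \<Rightarrow> real^3 \<Rightarrow> 3 \<Rightarrow> 'b" where
  "pd f x j = frechet_derivative f (at x) (axis j 1)"

definition grad :: "(real^3 \<Rightarrow> real^3^3) \<Rightarrow> (real^3 \<Rightarrow> real) \<Rightarrow> real^3 \<Rightarrow> real^3" where
  "grad G f x = matrix_inv (G x) *v (\<chi> j. pd f x j)"

definition flat :: "(real^3 \<Rightarrow> real^3^3) \<Rightarrow> (real^3 \<Rightarrow> real^3) \<Rightarrow> real^3 \<Rightarrow> real^3" where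
  "flat G J x = G x *v J x"

definition curl :: "(real^3 \<Rightarrow> real^3^3) \<Rightarrow> (real^3 \<Rightarrow> real^3) \<Rightarrow> real^3 \<Rightarrow> real^3" where
  "curl G J x = (1 / sqrt (det (G x))) *\<^sub>R
     vector [ pd (flat G J) x 2 $ 3 - pd (flat G J) x 3 $ 2,
              pd (flat G J) x 3 $ 1 - pd (flat G J) x 1 $ 3,
              pd (flat G J) x 1 $ 2 - pd (flat G J) x 2 $ 1 ]"

(* Riemannian cross product: (X<times>Y)<flat> = sqrt(det g) [ljk] X^j Y^k *)
definition gcross :: "(real^3 \<Rightarrow> real^3^3) \<Rightarrow> real^3 \<Rightarrow> real^3 \<Rightarrow> real^3 \<Rightarrow> real^3" where
  "gcross G x u w = sqrt (det (G x)) *\<^sub>R (matrix_inv (G x) *v cross3 u w)"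

definition lie :: "(real^3 \<Rightarrow> real^3) \<Rightarrow> (real^3 \<Rightarrow> real^3) \<Rightarrow> real^3 \<Rightarrow> real^3" where
  "lie X Y x = frechet_derivative Y (at x) (X x) - frechet_derivative X (at x) (Y x)"

definition poisson :: "(real^3 \<Rightarrow> real^3^3) \<Rightarrow> (real^3) set \<Rightarrow> (real^3 \<Rightarrow> real^3) \<Rightarrow> bool" where
  "poisson G U J \<longleftrightarrow> (\<forall>x\<in>U. gdot G x (J x) (curl G J x) = 0)"

end

theory Submission
  imports Defs
begin

lemma lin_expand3:
  fixes L :: "real^3 \<Rightarrow> 'b::real_vector"
  assumes "linear L"
  shows "L v = v$1 *\<^sub>R L (axis 1 1) + v$2 *\<^sub>R L (axis 2 1) + v$3 *\<^sub>R L (axis 3 1)"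
proof -
  have "v = (\<Sum>i\<in>UNIV. v$i *\<^sub>R axis i 1)"
    using basis_expansion[of v] by (simp add: scalar_mult_eq_scaleR)
  then have "L v = (\<Sum>i\<in>UNIV. v$i *\<^sub>R L (axis i 1))"
    by (metis (no_types, lifting) assms linear_scale linear_sum sum.cong)
  then show ?thesis by (simp add: sum_3)
qed

lemma lin_dot:
  fixes L :: "real^3 \<Rightarrow> real"
  assumes "linear L"
  shows "L v = v \<bullet> (\<chi> j. L (axis j 1))"
  using lin_expand3[OF assms, of v] by (simp add: inner_vec_def sum_3)

lemma curl_id:
  fixes L :: "real^3 \<Rightarrow> real^3"
  assumes "linear L"
  shows "vector [L (axis 2 1) $ 3 - L (axis 3 1) $ 2,
                 L (axis 3 1) $ 1 - L (axis 1 1) $ 3,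
                 L (axis 1 1) $ 2 - L (axis 2 1) $ 1] \<bullet> cross3 X Y
        = L X \<bullet> Y - L Y \<bullet> X"
  using lin_expand3[OF assms, of X] lin_expand3[OF assms, of Y]
  by (simp add: cross3_def inner_vec_def sum_3 algebra_simps)

lemma triple_id:
  fixes w c a b d :: "real^3"
  shows "(d \<bullet> cross3 a b) * (w \<bullet> c) = (w \<bullet> a) * (c \<bullet> cross3 b d) + (w \<bullet> b) * (c \<bullet> cross3 d a)
          + (w \<bullet> d) * (c \<bullet> cross3 a b)"
  by (simp add: cross3_def inner_vec_def sum_3 algebra_simps)



lemma bb_mv: "bounded_bilinear ((*v) :: real^'n^'m \<Rightarrow> real^'n \<Rightarrow> real^'m)"
proof (rule bounded_bilinear.intro)
  show "\<exists>K. \<forall>(a::real^'n^'m) b. norm (a *v b) \<le> norm a * norm b * K"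
  proof -
    have KK: "norm (A *v v) \<le> norm A * norm v * (real CARD('m) * real CARD('n))" for A :: "real^'n^'m" and v :: "real^'n"
    proof -
    have "norm (A *v v) \<le> (\<Sum>i\<in>UNIV. \<bar>(A *v v) $ i\<bar>)" by (rule norm_le_l1_cart)
    also have "\<dots> \<le> (\<Sum>i\<in>(UNIV::'m set). \<Sum>j\<in>(UNIV::'n set). norm A * norm v)"
    proof (rule sum_mono)
      fix i
      have "\<bar>(A *v v) $ i\<bar> = \<bar>\<Sum>j\<in>UNIV. A$i$j * v$j\<bar>" by (simp add: matrix_vector_mult_def)
      also have "\<dots> \<le> (\<Sum>j\<in>UNIV. \<bar>A$i$j * v$j\<bar>)" by (rule sum_abs)
      also have "\<dots> \<le> (\<Sum>j\<in>(UNIV::'n set). norm A * norm v)"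
      proof (rule sum_mono)
        fix j
        have "\<bar>A$i$j\<bar> \<le> norm A"
          using component_le_norm_cart[where x="A$i" and i=j] Finite_Cartesian_Product.norm_nth_le[where x=A and i=i] by linarith
        moreover have "\<bar>v$j\<bar> \<le> norm v" by (rule component_le_norm_cart)
        ultimately show "\<bar>A$i$j * v$j\<bar> \<le> norm A * norm v"
          by (simp add: abs_mult mult_mono')
      qed
      finally show "\<bar>(A *v v) $ i\<bar> \<le> (\<Sum>j\<in>(UNIV::'n set). norm A * norm v)" .
    qed
    also have "\<dots> = norm A * norm v * (real CARD('m) * real CARD('n))" by simp
    finally show ?thesis .
    qed
    show ?thesis by (intro exI allI) (rule KK)
  qed
qed (auto simp: algebra_simps matrix_vector_mult_add_rdistrib matrix_vector_right_distrib
   matrix_vector_mult_scaleR vec_eq_iff matrix_vector_mult_def sum_distrib_left mult_ac sum.distrib)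

lemma posdef_inv:
  fixes A :: "real^'n^'n"
  assumes "\<forall>w. w \<noteq> 0 \<longrightarrow> w \<bullet> (A *v w) > 0"
  shows "A *v (matrix_inv A *v w) = w" and "det A \<noteq> 0"
proof -
  have "\<forall>x. A *v x = 0 \<longrightarrow> x = 0"
    using assms by (metis inner_zero_right less_irrefl)
  then have "\<exists>B. B ** A = mat 1" using matrix_left_invertible_ker by blast
  then have inv: "invertible A" using invertible_left_inverse by blast
  then show "det A \<noteq> 0" using invertible_det_nz by blast
  have "A ** matrix_inv A = mat 1"
    using inv unfolding invertible_def matrix_inv_def by (metis (mono_tags, lifting) someI_ex)
  then show "A *v (matrix_inv A *v w) = w"
    by (simp add: matrix_vector_mul_assoc)
qed

lemma gsym:
  fixes A :: "real^'n^'n"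
  assumes "transpose A = A"
  shows "u \<bullet> (A *v w) = w \<bullet> (A *v u)"
proof -
  have "u \<bullet> (A *v w) = (\<Sum>i\<in>UNIV. \<Sum>j\<in>UNIV. u$i * A$i$j * w$j)"
    by (simp add: inner_vec_def matrix_vector_mult_def sum_distrib_left mult_ac)
  also have "\<dots> = (\<Sum>j\<in>UNIV. \<Sum>i\<in>UNIV. u$i * A$i$j * w$j)" by (rule sum.swap)
  also have "\<dots> = (\<Sum>j\<in>UNIV. \<Sum>i\<in>UNIV. w$j * A$j$i * u$i)"
  proof -
    have "A$i$j = A$j$i" for i j using assms by (metis transpose_def vec_lambda_beta)
    then show ?thesis by (simp add: mult_ac)
  qed
  also have "\<dots> = w \<bullet> (A *v u)"
    by (simp add: inner_vec_def matrix_vector_mult_def sum_distrib_left mult_ac)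
  finally show ?thesis .
qed

lemma mv_scaleR: "(A::real^'n^'m) *v (c *\<^sub>R x) = c *\<^sub>R (A *v x)"
  by (simp add: vec_eq_iff matrix_vector_mult_def sum_distrib_left mult_ac)

lemma ln_abs_deriv:
  fixes t :: real
  assumes "t \<noteq> 0"
  shows "DERIV (\<lambda>s. ln \<bar>s\<bar>) t :> 1 / t"
proof (cases "t > 0")
  case True
  have "DERIV ln t :> 1/t" using DERIV_ln_divide[OF True] .
  then show ?thesis
    by (rule has_field_derivative_transform_within_open[where S="{0<..}"]) (use True in auto)
next
  case False
  then have t: "t < 0" using assms by simp
  have "DERIV (\<lambda>s. ln (- s)) t :> 1/(-t) * (-1)"
    by (rule DERIV_chain2[OF DERIV_ln_divide]) (use t in \<open>auto intro!: derivative_eq_intros\<close>)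
  then have "DERIV (\<lambda>s. ln (- s)) t :> 1/t" by simp
  then show ?thesis
    by (rule has_field_derivative_transform_within_open[where S="{..<0}"]) (use t in auto)
qed

lemma alg_id:
  fixes a1 a2 m1 m2 A1 A2 M1 M2 c312 c313 c122 c123 :: real
  assumes "M1 = - c312 - m1 * (c313 + c122) - m1\<^sup>2 * c123"
      and "M2 = - c312 - m2 * (c313 + c122) - m2\<^sup>2 * c123"
  shows "(a1 + a2) * (- (a1 * M1 + A1 * m1 + (a2 * M2 + A2 * m2)) - (c312 * (a1 + a2) + c313 * (a1 * m1 + a2 * m2)))
       + (a1 * m1 + a2 * m2) * ((A1 + A2) - (c122 * (a1 + a2) + c123 * (a1 * m1 + a2 * m2)))
       = - (m1 - m2) * (a2 * A1 - a1 * A2 - a1 * a2 * c123 * (m1 - m2))"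
  unfolding assms by algebra

lemma fin_id:
  fixes p q A1 A2 c d :: real
  assumes "p \<noteq> 0" "q \<noteq> 0"
  shows "(q * A1 - p * A2 - p * q * c * d = 0) \<longleftrightarrow> (A1 / p - A2 / q = c * d)"
proof -
  have e: "A1 / p - A2 / q = (q * A1 - p * A2) / (p * q)" using assms by (simp add: field_simps)
  have "((q * A1 - p * A2) / (p * q) = c * d) \<longleftrightarrow> (q * A1 - p * A2 = c * d * (p * q))"
    using assms by (simp add: divide_eq_eq)
  then show ?thesis unfolding e by (auto simp: algebra_simps)
qed

lemma quot_id:
  fixes p q a b :: real
  assumes "p \<noteq> 0" "q \<noteq> 0"
  shows "(a * q - p * b) / (q * q) * (1 / (p / q)) = a / p - b / q"
  using assms by (simp add: field_simps)

lemma grad_dir: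
  assumes "\<forall>w. w \<noteq> 0 \<longrightarrow> w \<bullet> (G x *v w) > 0" and "f differentiable (at x)"
  shows "gdot G x u (grad G f x) = frechet_derivative f (at x) u"
proof -
  have "linear (frechet_derivative f (at x))"
    using assms(2) frechet_derivative_works has_derivative_linear by blast
  then show ?thesis
    unfolding gdot_def grad_def posdef_inv(1)[OF assms(1)] pd_def
    by (rule lin_dot[symmetric])
qed

theorem proposition2:
  fixes U :: "(real^3) set"
    and G :: "real^3 \<Rightarrow> real^3^3"
    and v :: "real^3 \<Rightarrow> real^3"
    and e :: "nat \<Rightarrow> real^3 \<Rightarrow> real^3"
    and C :: "nat \<Rightarrow> nat \<Rightarrow> nat \<Rightarrow> real^3 \<Rightarrow> real"
    and \<mu>1 \<mu>2 \<alpha>1 \<alpha>2 :: "real^3 \<Rightarrow> real"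
  assumes U: "open U"
    and G: "riem_metric G U"
    and v_diff: "\<forall>x\<in>U. v differentiable (at x)"
    and v_nz: "\<forall>x\<in>U. v x \<noteq> 0"
    and e1: "\<forall>x\<in>U. e 1 x = (1 / gnorm G x (v x)) *\<^sub>R v x"
    and e_diff: "\<forall>i\<in>{1,2,3}. \<forall>x\<in>U. e i differentiable (at x)"
    and e_on: "\<forall>i\<in>{1,2,3}. \<forall>j\<in>{1,2,3}. \<forall>x\<in>U.
                 gdot G x (e i x) (e j x) = (if i = j then 1 else 0)"
    and e3: "\<forall>x\<in>U. e 3 x = gcross G x (e 1 x) (e 2 x)"
    and C: "\<forall>i\<in>{1,2,3}. \<forall>j\<in>{1,2,3}. \<forall>x\<in>U.
              lie (e i) (e j) x = (\<Sum>k\<in>{1,2,3}. C i j k x *\<^sub>R e k x)"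
    and \<mu>_diff: "\<forall>x\<in>U. \<mu>1 differentiable (at x) \<and> \<mu>2 differentiable (at x)"
    and \<mu>1_sol: "\<forall>x\<in>U. gdot G x (e 1 x) (grad G \<mu>1 x)
                  = - C 3 1 2 x - \<mu>1 x * (C 3 1 3 x + C 1 2 2 x) - (\<mu>1 x)\<^sup>2 * C 1 2 3 x"
    and \<mu>2_sol: "\<forall>x\<in>U. gdot G x (e 1 x) (grad G \<mu>2 x)
                  = - C 3 1 2 x - \<mu>2 x * (C 3 1 3 x + C 1 2 2 x) - (\<mu>2 x)\<^sup>2 * C 1 2 3 x"
    and \<mu>_neq: "\<forall>x\<in>U. \<mu>1 x \<noteq> \<mu>2 x"
    and \<alpha>_diff: "\<forall>x\<in>U. \<alpha>1 differentiable (at x) \<and> \<alpha>2 differentiable (at x)"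
    and \<alpha>_nz: "\<forall>x\<in>U. \<alpha>1 x \<noteq> 0 \<and> \<alpha>2 x \<noteq> 0"
  shows "poisson G U (\<lambda>x. \<alpha>1 x *\<^sub>R (e 2 x + \<mu>1 x *\<^sub>R e 3 x) + \<alpha>2 x *\<^sub>R (e 2 x + \<mu>2 x *\<^sub>R e 3 x))
         \<longleftrightarrow> (\<forall>x\<in>U. gdot G x (e 1 x) (grad G (\<lambda>y. ln \<bar>\<alpha>1 y / \<alpha>2 y\<bar>) x)
                     = C 1 2 3 x * (\<mu>1 x - \<mu>2 x))"
proof -
  define J where "J = (\<lambda>x. \<alpha>1 x *\<^sub>R (e 2 x + \<mu>1 x *\<^sub>R e 3 x) + \<alpha>2 x *\<^sub>R (e 2 x + \<mu>2 x *\<^sub>R e 3 x))"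
  define \<omega> where "\<omega> = (\<lambda>y. G y *v J y)"
  define Lf where "Lf = (\<lambda>y. ln \<bar>\<alpha>1 y / \<alpha>2 y\<bar>)"
  have Gsym: "\<And>y. y \<in> U \<Longrightarrow> transpose (G y) = G y" using G unfolding riem_metric_def by blast
  have Gpos: "\<And>y. y \<in> U \<Longrightarrow> \<forall>w. w \<noteq> 0 \<longrightarrow> w \<bullet> (G y *v w) > 0" using G unfolding riem_metric_def by blast
  have Gdiff: "\<And>y. y \<in> U \<Longrightarrow> G differentiable (at y)" using G unfolding riem_metric_def by blast
  have ed: "\<And>i y. i \<in> {1,2,3} \<Longrightarrow> y \<in> U \<Longrightarrow> e i differentiable (at y)" using e_diff by blast
  have on: "\<And>i j y. i \<in> {1,2,3} \<Longrightarrow> j \<in> {1,2,3} \<Longrightarrow> y \<in> U \<Longrightarrow>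
      gdot G y (e i y) (e j y) = (if i = j then 1 else 0)" using e_on by blast
  have gJ: "gdot G y (e j y) (J y) = \<alpha>1 y * (gdot G y (e j y) (e 2 y) + \<mu>1 y * gdot G y (e j y) (e 3 y))
        + \<alpha>2 y * (gdot G y (e j y) (e 2 y) + \<mu>2 y * gdot G y (e j y) (e 3 y))" for j y
    by (simp add: J_def gdot_def matrix_vector_right_distrib mv_scaleR inner_add_right algebra_simps)
  have \<omega>e: "\<omega> y \<bullet> e j y = gdot G y (e j y) (J y)" if "y \<in> U" for j y
    unfolding \<omega>_def gdot_def by (rule inner_commute)
  have b1: "\<omega> y \<bullet> e 1 y = 0" if "y \<in> U" for y
    using that by (simp add: \<omega>e gJ on)
  have b2: "\<omega> y \<bullet> e 2 y = \<alpha>1 y + \<alpha>2 y" if "y \<in> U" for y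
    using that by (simp add: \<omega>e gJ on)
  have b3: "\<omega> y \<bullet> e 3 y = \<alpha>1 y * \<mu>1 y + \<alpha>2 y * \<mu>2 y" if "y \<in> U" for y
    using that by (simp add: \<omega>e gJ on)
  have key: "gdot G x (J x) (curl G J x) = 0 \<longleftrightarrow>
      gdot G x (e 1 x) (grad G Lf x) = C 1 2 3 x * (\<mu>1 x - \<mu>2 x)" if x: "x \<in> U" for x
  proof -
    define DG where "DG = frechet_derivative G (at x)"
    define De where "De = (\<lambda>i. frechet_derivative (e i) (at x))"
    define Da1 where "Da1 = frechet_derivative \<alpha>1 (at x)"
    define Da2 where "Da2 = frechet_derivative \<alpha>2 (at x)"
    define Dm1 where "Dm1 = frechet_derivative \<mu>1 (at x)"
    define Dm2 where "Dm2 = frechet_derivative \<mu>2 (at x)"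
    have hG: "(G has_derivative DG) (at x)" using Gdiff[OF x] frechet_derivative_works DG_def by blast
    have he: "(e i has_derivative De i) (at x)" if "i \<in> {1,2,3}" for i
      using ed[OF that x] frechet_derivative_works De_def by blast
    have ha1: "(\<alpha>1 has_derivative Da1) (at x)" using \<alpha>_diff x frechet_derivative_works Da1_def by blast
    have ha2: "(\<alpha>2 has_derivative Da2) (at x)" using \<alpha>_diff x frechet_derivative_works Da2_def by blast
    have hm1: "(\<mu>1 has_derivative Dm1) (at x)" using \<mu>_diff x frechet_derivative_works Dm1_def by blast
    have hm2: "(\<mu>2 has_derivative Dm2) (at x)" using \<mu>_diff x frechet_derivative_works Dm2_def by blast
    have "J differentiable (at x)"
    proof -
      have he2: "(e 2 has_derivative De 2) (at x)" and he3: "(e 3 has_derivative De 3) (at x)"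
        using he by auto
      show ?thesis unfolding J_def differentiable_def
        by (rule exI, (rule has_derivative_add has_derivative_scaleR he2 he3 ha1 ha2 hm1 hm2)+)
    qed
    then obtain DJ where hJ: "(J has_derivative DJ) (at x)" unfolding differentiable_def by blast
    have "\<omega> differentiable (at x)"
      unfolding \<omega>_def differentiable_def using bounded_bilinear.FDERIV[OF bb_mv hG hJ] by blast
    then have h\<omega>: "(\<omega> has_derivative frechet_derivative \<omega> (at x)) (at x)"
      using frechet_derivative_works by blast
    define D\<omega> where "D\<omega> = frechet_derivative \<omega> (at x)"
    have lin\<omega>: "linear D\<omega>" using h\<omega> D\<omega>_def has_derivative_linear by blast
    have h\<omega>e: "((\<lambda>y. \<omega> y \<bullet> e j y) has_derivative (\<lambda>h. \<omega> x \<bullet> De j h + D\<omega> h \<bullet> e j x)) (at x)"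
      if "j \<in> {1,2,3}" for j
      using bounded_bilinear.FDERIV[OF bounded_bilinear_inner h\<omega>[folded D\<omega>_def] he[OF that]] .
    have db1: "\<omega> x \<bullet> De 1 h + D\<omega> h \<bullet> e 1 x = 0" for h
    proof -
      have "((\<lambda>y. \<omega> y \<bullet> e 1 y) has_derivative (\<lambda>h. 0)) (at x)"
        by (rule has_derivative_transform_within_open[OF has_derivative_const[of 0] U x]) (metis b1)
      from has_derivative_unique[OF h\<omega>e this] show ?thesis by (simp add: fun_eq_iff)
    qed
    have db2: "\<omega> x \<bullet> De 2 h + D\<omega> h \<bullet> e 2 x = Da1 h + Da2 h" for h
    proof -
      have "((\<lambda>y. \<alpha>1 y + \<alpha>2 y) has_derivative (\<lambda>h. Da1 h + Da2 h)) (at x)"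
        using ha1 ha2 by (rule has_derivative_add)
      then have "((\<lambda>y. \<omega> y \<bullet> e 2 y) has_derivative (\<lambda>h. Da1 h + Da2 h)) (at x)"
        by (rule has_derivative_transform_within_open[OF _ U x]) (metis b2)
      from has_derivative_unique[OF h\<omega>e this] show ?thesis by (simp add: fun_eq_iff)
    qed
    have db3: "\<omega> x \<bullet> De 3 h + D\<omega> h \<bullet> e 3 x
        = \<alpha>1 x * Dm1 h + Da1 h * \<mu>1 x + (\<alpha>2 x * Dm2 h + Da2 h * \<mu>2 x)" for h
    proof -
      have "((\<lambda>y. \<alpha>1 y * \<mu>1 y + \<alpha>2 y * \<mu>2 y) has_derivative
          (\<lambda>h. \<alpha>1 x * Dm1 h + Da1 h * \<mu>1 x + (\<alpha>2 x * Dm2 h + Da2 h * \<mu>2 x))) (at x)"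
        using ha1 ha2 hm1 hm2 by (intro has_derivative_add has_derivative_mult)
      then have "((\<lambda>y. \<omega> y \<bullet> e 3 y) has_derivative
          (\<lambda>h. \<alpha>1 x * Dm1 h + Da1 h * \<mu>1 x + (\<alpha>2 x * Dm2 h + Da2 h * \<mu>2 x))) (at x)"
        by (rule has_derivative_transform_within_open[OF _ U x]) (metis b3)
      from has_derivative_unique[OF h\<omega>e this] show ?thesis by (simp add: fun_eq_iff)
    qed
    (* d omega via brackets *)
    have lieC: "\<omega> x \<bullet> (De j (e i x) - De i (e j x)) = (\<Sum>k\<in>{1,2,3}. C i j k x * (\<omega> x \<bullet> e k x))"
      if "i \<in> {1,2,3}" "j \<in> {1,2,3}" for i j
    proof -
      have "De j (e i x) - De i (e j x) = (\<Sum>k\<in>{1,2,3}. C i j k x *\<^sub>R e k x)"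
      proof -
        have "lie (e i) (e j) x = (\<Sum>k\<in>{1,2,3}. C i j k x *\<^sub>R e k x)" using C that x by blast
        then show ?thesis unfolding lie_def De_def .
      qed
      then show ?thesis by (simp add: inner_add_right)
    qed
    have d31: "D\<omega> (e 3 x) \<bullet> e 1 x - D\<omega> (e 1 x) \<bullet> e 3 x
        = - (\<alpha>1 x * Dm1 (e 1 x) + Da1 (e 1 x) * \<mu>1 x + (\<alpha>2 x * Dm2 (e 1 x) + Da2 (e 1 x) * \<mu>2 x))
          - (C 3 1 2 x * (\<alpha>1 x + \<alpha>2 x) + C 3 1 3 x * (\<alpha>1 x * \<mu>1 x + \<alpha>2 x * \<mu>2 x))"
      using db1[of "e 3 x"] db3[of "e 1 x"] lieC[of 3 1] b1[OF x] b2[OF x] b3[OF x]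
      by (simp add: inner_diff_right algebra_simps)
    have d12: "D\<omega> (e 1 x) \<bullet> e 2 x - D\<omega> (e 2 x) \<bullet> e 1 x
        = (Da1 (e 1 x) + Da2 (e 1 x))
          - (C 1 2 2 x * (\<alpha>1 x + \<alpha>2 x) + C 1 2 3 x * (\<alpha>1 x * \<mu>1 x + \<alpha>2 x * \<mu>2 x))"
      using db2[of "e 1 x"] db1[of "e 2 x"] lieC[of 1 2] b1[OF x] b2[OF x] b3[OF x]
      by (simp add: inner_diff_right algebra_simps)
    have fl: "flat G J = \<omega>" by (simp add: fun_eq_iff flat_def \<omega>_def)
    define c :: "real^3" where "c = vector [D\<omega> (axis 2 1) $ 3 - D\<omega> (axis 3 1) $ 2,
                 D\<omega> (axis 3 1) $ 1 - D\<omega> (axis 1 1) $ 3,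
                 D\<omega> (axis 1 1) $ 2 - D\<omega> (axis 2 1) $ 1]"
    have curl_eq: "curl G J x = (1 / sqrt (det (G x))) *\<^sub>R c"
      unfolding curl_def pd_def fl c_def D\<omega>_def ..
    have cid: "c \<bullet> cross3 X Y = D\<omega> X \<bullet> Y - D\<omega> Y \<bullet> X" for X Y
      unfolding c_def by (rule curl_id[OF lin\<omega>])
    have detnz: "det (G x) \<noteq> 0" using posdef_inv(2)[OF Gpos[OF x]] .
    then have snz: "sqrt (det (G x)) \<noteq> 0" by simp
    have pois_eq: "gdot G x (J x) (curl G J x) = (1 / sqrt (det (G x))) * (\<omega> x \<bullet> c)"
    proof -
      have "J x \<bullet> (G x *v c) = \<omega> x \<bullet> c"
        using gsym[OF Gsym[OF x], of "J x" c] by (simp add: \<omega>_def inner_commute)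
      then show ?thesis by (simp add: curl_eq gdot_def mv_scaleR)
    qed
    define T where "T = e 3 x \<bullet> cross3 (e 1 x) (e 2 x)"
    have Tnz: "T \<noteq> 0"
    proof -
      have "G x *v e 3 x = sqrt (det (G x)) *\<^sub>R cross3 (e 1 x) (e 2 x)"
        using e3 x posdef_inv(1)[OF Gpos[OF x]] by (simp add: gcross_def mv_scaleR)
      moreover have "gdot G x (e 3 x) (e 3 x) = 1" using on[of 3 3 x] x by simp
      ultimately have "sqrt (det (G x)) * T = 1" by (simp add: gdot_def T_def)
      then show ?thesis by auto
    qed
    have trip: "T * (\<omega> x \<bullet> c) = (\<alpha>1 x + \<alpha>2 x) * (D\<omega> (e 3 x) \<bullet> e 1 x - D\<omega> (e 1 x) \<bullet> e 3 x)
        + (\<alpha>1 x * \<mu>1 x + \<alpha>2 x * \<mu>2 x) * (D\<omega> (e 1 x) \<bullet> e 2 x - D\<omega> (e 2 x) \<bullet> e 1 x)"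
      using triple_id[of "e 3 x" "e 1 x" "e 2 x" "\<omega> x" c] b1[OF x] b2[OF x] b3[OF x]
      unfolding T_def cid by simp
    have M1: "Dm1 (e 1 x) = - C 3 1 2 x - \<mu>1 x * (C 3 1 3 x + C 1 2 2 x) - (\<mu>1 x)\<^sup>2 * C 1 2 3 x"
    proof -
      have "gdot G x (e 1 x) (grad G \<mu>1 x) = frechet_derivative \<mu>1 (at x) (e 1 x)"
        by (rule grad_dir[where G=G and x=x, OF Gpos[OF x]]) (use \<mu>_diff x in blast)
      then show ?thesis using \<mu>1_sol x unfolding Dm1_def by simp
    qed
    have M2: "Dm2 (e 1 x) = - C 3 1 2 x - \<mu>2 x * (C 3 1 3 x + C 1 2 2 x) - (\<mu>2 x)\<^sup>2 * C 1 2 3 x"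
    proof -
      have "gdot G x (e 1 x) (grad G \<mu>2 x) = frechet_derivative \<mu>2 (at x) (e 1 x)"
        by (rule grad_dir[where G=G and x=x, OF Gpos[OF x]]) (use \<mu>_diff x in blast)
      then show ?thesis using \<mu>2_sol x unfolding Dm2_def by simp
    qed
    have a1nz: "\<alpha>1 x \<noteq> 0" and a2nz: "\<alpha>2 x \<noteq> 0" using \<alpha>_nz x by auto
    have hL: "(Lf has_derivative (\<lambda>h. (Da1 h * \<alpha>2 x - \<alpha>1 x * Da2 h) / (\<alpha>2 x * \<alpha>2 x)
                 * (1 / (\<alpha>1 x / \<alpha>2 x)))) (at x)"
      unfolding Lf_def
      by (rule DERIV_compose_FDERIV[OF ln_abs_deriv has_derivative_divide'[OF ha1 ha2 a2nz]])
         (use a1nz a2nz in simp)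
    have LK: "gdot G x (e 1 x) (grad G Lf x) = Da1 (e 1 x) / \<alpha>1 x - Da2 (e 1 x) / \<alpha>2 x"
    proof -
      have "Lf differentiable (at x)" using hL differentiable_def by blast
      then have "gdot G x (e 1 x) (grad G Lf x) = frechet_derivative Lf (at x) (e 1 x)"
        by (rule grad_dir[where G=G and x=x, OF Gpos[OF x]])
      also have "frechet_derivative Lf (at x) = (\<lambda>h. (Da1 h * \<alpha>2 x - \<alpha>1 x * Da2 h) / (\<alpha>2 x * \<alpha>2 x)
                 * (1 / (\<alpha>1 x / \<alpha>2 x)))"
        by (rule has_derivative_unique[OF _ hL]) (use \<open>Lf differentiable (at x)\<close> frechet_derivative_works in blast)
      finally show ?thesis using quot_id[OF a1nz a2nz] by simp
    qed
    have alg: "T * (\<omega> x \<bullet> c) = - (\<mu>1 x - \<mu>2 x) * (\<alpha>2 x * Da1 (e 1 x) - \<alpha>1 x * Da2 (e 1 x)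
        - \<alpha>1 x * \<alpha>2 x * C 1 2 3 x * (\<mu>1 x - \<mu>2 x))"
      unfolding trip d31 d12 by (rule alg_id[OF M1 M2])
    have mnz: "\<mu>1 x - \<mu>2 x \<noteq> 0" using \<mu>_neq x by auto
    have "gdot G x (J x) (curl G J x) = 0 \<longleftrightarrow> T * (\<omega> x \<bullet> c) = 0"
      using pois_eq snz Tnz by simp
    also have "\<dots> \<longleftrightarrow> \<alpha>2 x * Da1 (e 1 x) - \<alpha>1 x * Da2 (e 1 x)
        - \<alpha>1 x * \<alpha>2 x * C 1 2 3 x * (\<mu>1 x - \<mu>2 x) = 0"
      unfolding alg using mnz by simp
    also have "\<dots> \<longleftrightarrow> gdot G x (e 1 x) (grad G Lf x) = C 1 2 3 x * (\<mu>1 x - \<mu>2 x)"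
      unfolding LK by (rule fin_id[OF a1nz a2nz])
    finally show ?thesis .
  qed
  show ?thesis
    unfolding poisson_def J_def[symmetric] Lf_def[symmetric] using key by blast
qed

end
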